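(* Let $\sigma,\eta>0$ and $\mathscr{C}$ be a family of balls as in the context. Let $B\in\mathscr{C}$ and $x\in B$. Then $y\in B^{(4\lceil|x-y|\rceil)}$ for every $y\in\mathbb{R}^3$.
   Context: Cover: for constants $\sigma,\eta>0$, $\mathscr{C}$ is a family of closed balls in $\mathbb{R}^3$ with $\bigcup_{B\in\mathscr{C}}B=\mathbb{R}^3$ and $|B|\geq 4\pi/3$ for all $B\in\mathscr{C}$, such that (i) each ball in $\mathscr{C}$ intersects at most $\sigma$ balls in $\mathscr{C}$, and (ii) if $B,B'\in\mathscr{C}$ intersect then $\eta^{-1}\le |B|^{1/3}/|B'|^{1/3}\le\eta$. Layers: for $B\in\mathscr{C}$ set $B^{(0)}:=B$, $P^{(0)}:=\{B\}$, and for $n\ge1$, $P^{(n)}:=\{B'\in\mathscr{C}: B'\cap B^{(n-1)}\neq\emptyset\}$, $B^{(n)}:=\bigcup_{B'\in P^{(n)}}B'$. *)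

theory Defs
  imports "HOL-Analysis.Analysis"
begin

fun layer :: "(real^3) set set \<Rightarrow> (real^3) set \<Rightarrow> nat \<Rightarrow> (real^3) set" where
  "layer C B 0 = B"
| "layer C B (Suc n) = \<Union>{B' \<in> C. B' \<inter> layer C B n \<noteq> {}}"

definition good_cover :: "real \<Rightarrow> real \<Rightarrow> (real^3) set set \<Rightarrow> bool" where
  "good_cover \<sigma> \<eta> C \<longleftrightarrow>
     (\<forall>B\<in>C. \<exists>c r. B = cball c r) \<and>
     \<Union>C = UNIV \<and>
     (\<forall>B\<in>C. measure lebesgue B \<ge> 4 * pi / 3) \<and>
     (\<forall>B\<in>C. finite {B'\<in>C. B' \<noteq> B \<and> B' \<inter> B \<noteq> {}} \<and>
              real (card {B'\<in>C. B' \<noteq> B \<and> B' \<inter> B \<noteq> {}}) \<le> \<sigma>) \<and>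
     (\<forall>B\<in>C. \<forall>B'\<in>C. B \<inter> B' \<noteq> {} \<longrightarrow>
        inverse \<eta> \<le> measure lebesgue B powr (1/3) / measure lebesgue B' powr (1/3) \<and>
        measure lebesgue B powr (1/3) / measure lebesgue B' powr (1/3) \<le> \<eta>)"

end

theory Submission
  imports Defs
begin

lemma meas_cball: "measure lebesgue (cball (c::real^3) r) = measure lborel (cball c r)"
  by (rule measure_completion) simp

lemma vol3: "r \<ge> 0 \<Longrightarrow> measure lborel (cball (c::real^3) r) = 4/3 * pi * r^3"
  by (simp add: content_cball unit_ball_vol_3)

lemma gc_ball: "good_cover \<sigma> \<eta> C \<Longrightarrow> \<forall>B\<in>C. \<exists>c r. B = cball c r"
  unfolding good_cover_def by (rule conjunct1)

lemma gc_cover: "good_cover \<sigma> \<eta> C \<Longrightarrow> \<Union>C = UNIV"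
  unfolding good_cover_def by (rule conjunct1[OF conjunct2])

lemma gc_meas: "good_cover \<sigma> \<eta> C \<Longrightarrow> \<forall>B\<in>C. measure lebesgue B \<ge> 4 * pi / 3"
  unfolding good_cover_def by (rule conjunct1[OF conjunct2[OF conjunct2]])

lemma gc_fin: "good_cover \<sigma> \<eta> C \<Longrightarrow>
   \<forall>B\<in>C. finite {B'\<in>C. B' \<noteq> B \<and> B' \<inter> B \<noteq> {}} \<and>
              real (card {B'\<in>C. B' \<noteq> B \<and> B' \<inter> B \<noteq> {}}) \<le> \<sigma>"
  unfolding good_cover_def by (rule conjunct1[OF conjunct2[OF conjunct2[OF conjunct2]]])

lemma radius_ge1:
  assumes "good_cover \<sigma> \<eta> C" "G \<in> C"
  shows "\<exists>c r. G = cball c r \<and> r \<ge> 1"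
proof -
  obtain c r where G: "G = cball c r" using gc_ball[OF assms(1)] assms(2) by blast
  have m: "measure lebesgue G \<ge> 4 * pi / 3" using gc_meas[OF assms(1)] assms(2) by blast
  have "r \<ge> 1"
  proof (rule ccontr)
    assume nr: "\<not> r \<ge> 1"
    show False
    proof (cases "r < 0")
      case True
      then have "G = {}" using G by simp
      then show False using m pi_gt_zero by simp
    next
      case False
      have "measure lebesgue G = 4/3 * pi * r^3"
        using False unfolding G meas_cball by (rule vol3[of r c, OF not_less[THEN iffD1]])
      then have "4 * pi / 3 \<le> 4/3 * pi * r^3" using m by simp
      then have "1 \<le> r^3" using pi_gt_zero by simp
      moreover have "r^3 < 1" using False nr
        by (simp add: power_less_one_iff)
      ultimately show False by simp
    qed
  qed
  then show ?thesis using G by blast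
qed

lemma layer_mono_Suc:
  assumes "\<Union>C = UNIV"
  shows "layer C B n \<subseteq> layer C B (Suc n)"
proof
  fix p assume p: "p \<in> layer C B n"
  obtain G where "G \<in> C" "p \<in> G" using assms by blast
  then show "p \<in> layer C B (Suc n)" using p by auto
qed

lemma layer_mono:
  assumes "\<Union>C = UNIV" "m \<le> n"
  shows "layer C B m \<subseteq> layer C B n"
  using assms(2)
proof (induction n)
  case 0 then show ?case by simp
next
  case (Suc n)
  then show ?case using layer_mono_Suc[OF assms(1), of B n]
    by (metis le_Suc_eq order_trans order_refl)
qed

lemma unit_sub:
  fixes c z :: "real^3"
  assumes "r \<ge> 1" "z \<in> cball c r"
  shows "\<exists>b. cball b 1 \<subseteq> cball c r \<and> z \<in> cball b 1"
proof -
  define b where "b = c + ((r-1)/r) *\<^sub>R (z - c)"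
  have r0: "r > 0" using assms by simp
  have nz: "norm (z - c) \<le> r" using assms by (simp add: dist_norm norm_minus_commute)
  have "z - b = (z - c) - ((r-1)/r) *\<^sub>R (z - c)" by (simp add: b_def)
  also have "\<dots> = (1 - (r-1)/r) *\<^sub>R (z - c)" by (simp add: scaleR_left_diff_distrib)
  also have "1 - (r-1)/r = 1/r" using r0 by (simp add: field_simps)
  finally have zb_eq: "z - b = (1/r) *\<^sub>R (z - c)" .
  have "dist b z = norm (z - b)" by (simp add: dist_norm norm_minus_commute)
  also have "\<dots> = norm ((1/r) *\<^sub>R (z - c))" using zb_eq by simp
  also have "\<dots> = norm (z - c) / r" using r0 by simp
  finally have "dist b z = norm (z - c) / r" .
  also have "\<dots> \<le> 1" using nz r0 by simp
  finally have zb: "z \<in> cball b 1" by simp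
  have cb: "dist c b = (r-1)/r * norm (z - c)" unfolding b_def using assms
    by (simp add: dist_norm)
  have "(r-1)/r * norm (z - c) \<le> (r-1)/r * r"
    using nz assms by (intro mult_left_mono) auto
  then have cb': "dist c b \<le> r - 1" using cb r0 by simp
  have "cball b 1 \<subseteq> cball c r"
  proof
    fix w assume "w \<in> cball b 1"
    then have "dist b w \<le> 1" by simp
    then have "dist c w \<le> r" using dist_triangle[of c w b] cb' by simp
    then show "w \<in> cball c r" by simp
  qed
  then show ?thesis using zb by blast
qed

lemma meet_cballs:
  fixes c b :: "real^3"
  assumes "dist c b \<le> r + s" "r \<ge> 0" "s \<ge> 0"
  shows "cball c r \<inter> cball b s \<noteq> {}"
proof (cases "dist c b \<le> r")
  case True then show ?thesis using assms by auto
next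
  case False
  define d where "d = dist c b"
  have d0: "d > 0" using False assms(2) d_def by linarith
  define w where "w = c + (r/d) *\<^sub>R (b - c)"
  have "dist c w = r / d * norm (b - c)" unfolding w_def using d0 assms by (simp add: dist_norm)
  also have "norm (b - c) = d" by (simp add: d_def dist_norm norm_minus_commute)
  finally have w1: "dist c w = r" using d0 by simp
  have "b - w = (1 - r/d) *\<^sub>R (b - c)" unfolding w_def by (simp add: algebra_simps)
  then have "dist w b = \<bar>1 - r/d\<bar> * d"
    by (simp add: dist_norm d_def norm_minus_commute)
  also have "\<bar>1 - r/d\<bar> = 1 - r/d" using False d_def d0 by (simp add: divide_simps)
  also have "(1 - r/d) * d = d - r" using d0 by (simp add: algebra_simps)
  finally have "dist w b \<le> s" using assms d_def by simp
  then have "w \<in> cball c r \<inter> cball b s" using w1 by (simp add: dist_commute)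
  then show ?thesis by blast
qed

lemma stewart:
  fixes b q c :: "real^3"
  shows "(1-t) * (norm (c - b))^2 + t * (norm (c - q))^2
        = (norm (c - ((1-t) *\<^sub>R b + t *\<^sub>R q)))^2 + t*(1-t) * (norm (b - q))^2"
proof -
  define a where "a = c - b"
  define e where "e = q - b"
  have 1: "c - q = a - e" by (simp add: a_def e_def)
  have 2: "c - ((1-t) *\<^sub>R b + t *\<^sub>R q) = a - t *\<^sub>R e"
    by (simp add: a_def e_def algebra_simps)
  have 3: "b - q = - e" by (simp add: e_def)
  show ?thesis unfolding a_def[symmetric] 1 2 3 norm_minus_cancel
    by (simp add: power2_norm_eq_inner inner_diff_left inner_diff_right inner_commute algebra_simps)
qed

lemma key:
  fixes b q c p :: "real^3"
  assumes "dist b q \<le> 3" "p \<in> closed_segment b q" "dist c p \<le> r" "r \<ge> 1"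
  shows "dist c b \<le> r + 1 \<or> dist c q \<le> r + 1"
proof (rule ccontr)
  assume H: "\<not> (dist c b \<le> r + 1 \<or> dist c q \<le> r + 1)"
  obtain t where t: "0 \<le> t" "t \<le> 1" "p = (1-t) *\<^sub>R b + t *\<^sub>R q"
    using assms(2) unfolding closed_segment_def by blast
  have X: "(norm (c - b))^2 > (r+1)^2" using H assms(4)
    by (simp add: dist_norm power_strict_mono)
  have Y: "(norm (c - q))^2 > (r+1)^2" using H assms(4)
    by (simp add: dist_norm power_strict_mono)
  have "(1-t) * (norm (c - b))^2 + t * (norm (c - q))^2 \<ge> (1-t)*(r+1)^2 + t*(r+1)^2"
    using X Y t by (intro add_mono mult_left_mono) auto
  then have L: "(1-t) * (norm (c - b))^2 + t * (norm (c - q))^2 \<ge> (r+1)^2"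
    by (simp add: algebra_simps)
  have P: "(norm (c - p))^2 \<le> r^2" using assms(3) by (simp add: dist_norm power_mono)
  have Q: "(norm (b - q))^2 \<le> 9" using assms(1)
    using power_mono[of "norm (b - q)" 3 2] by (simp add: dist_norm)
  have Te: "t*(1-t) = 1/4 - (t-1/2)^2" by (simp add: power2_eq_square algebra_simps)
  have T: "t*(1-t) \<le> 1/4" using Te zero_le_power2[of "t-1/2"] by linarith
  have T0: "t*(1-t) \<ge> 0" using t by simp
  have M: "t*(1-t) * (norm (b - q))^2 \<le> 1/4 * 9"
    using T T0 Q by (intro mult_mono) auto
  have S: "(1-t) * (norm (c - b))^2 + t * (norm (c - q))^2
        = (norm (c - p))^2 + t*(1-t) * (norm (b - q))^2"
    using stewart[of t c b q] t(3) by simp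
  have "(r+1)^2 \<le> r^2 + 9/4" using L S P M by linarith
  then show False using assms(4) by (simp add: power2_eq_square algebra_simps)
qed

lemma point_finite:
  assumes gc: "good_cover \<sigma> \<eta> C"
  shows "finite {G\<in>C. l \<in> G}"
proof -
  obtain H where H: "H \<in> C" "l \<in> H" using gc_cover[OF gc] by blast
  have "{G\<in>C. l \<in> G} \<subseteq> insert H {B'\<in>C. B' \<noteq> H \<and> B' \<inter> H \<noteq> {}}"
    using H by blast
  moreover have "finite {B'\<in>C. B' \<noteq> H \<and> B' \<inter> H \<noteq> {}}"
    using gc_fin[OF gc] H(1) by blast
  ultimately show ?thesis by (meson finite_insert finite_subset)
qed

lemma loc_fin:
  fixes w :: "real^3"
  assumes gc: "good_cover \<sigma> \<eta> C"
  shows "finite {G\<in>C. G \<inter> cball w R \<noteq> {}}"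
proof (rule ccontr)
  define A where "A = {G\<in>C. G \<inter> cball w R \<noteq> {}}"
  assume "\<not> finite {G\<in>C. G \<inter> cball w R \<noteq> {}}"
  then have infA: "infinite A" by (simp add: A_def)
  have ex: "\<exists>h. cball h 1 \<subseteq> G \<and> h \<in> cball w (R+1)" if G: "G \<in> A" for G
  proof -
    obtain c r where cr: "G = cball c r" "r \<ge> 1" using radius_ge1[OF gc] G A_def by blast
    obtain p where p: "p \<in> G" "p \<in> cball w R" using G A_def by blast
    obtain h where h: "cball h 1 \<subseteq> cball c r" "p \<in> cball h 1"
      using unit_sub[OF cr(2)] p(1) cr(1) by blast
    have "dist w h \<le> dist w p + dist p h" by (rule dist_triangle)
    also have "\<dots> \<le> R + 1" using p(2) h(2) by (simp add: dist_commute add_mono)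
    finally show ?thesis using h(1) cr(1) by auto
  qed
  define hf where "hf G = (SOME h. cball h 1 \<subseteq> G \<and> h \<in> cball w (R+1))" for G
  have hf: "cball (hf G) 1 \<subseteq> G" "hf G \<in> cball w (R+1)" if "G \<in> A" for G
    using someI_ex[OF ex[OF that]] unfolding hf_def by blast+
  have "\<exists>l. infinite {G\<in>A. l \<in> G}"
  proof (cases "finite (hf ` A)")
    case True
    have "A = (\<Union>v\<in>hf ` A. {G\<in>A. hf G = v})" by blast
    then obtain v where v: "v \<in> hf ` A" "infinite {G\<in>A. hf G = v}"
      using infA True by (metis (no_types, lifting) finite_UN)
    have "{G\<in>A. hf G = v} \<subseteq> {G\<in>A. v \<in> G}"
    proof
      fix G assume "G \<in> {G\<in>A. hf G = v}"
      then have "G \<in> A" "hf G = v" by auto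
      then show "G \<in> {G\<in>A. v \<in> G}" using hf(1)[of G] by auto
    qed
    then have "infinite {G\<in>A. v \<in> G}" using v(2) finite_subset by blast
    then show ?thesis by blast
  next
    case False
    have "hf ` A \<subseteq> cball w (R+1)" using hf(2) by blast
    then obtain l where "l islimpt (hf ` A)"
      using Heine_Borel_imp_Bolzano_Weierstrass[OF compact_cball False] by blast
    then have inf1: "infinite (hf ` A \<inter> ball l 1)" by (simp add: islimpt_eq_infinite_ball)
    have "hf ` A \<inter> ball l 1 \<subseteq> hf ` {G\<in>A. l \<in> G}"
    proof
      fix v assume "v \<in> hf ` A \<inter> ball l 1"
      then obtain G where G: "G \<in> A" "v = hf G" "dist l v < 1" by auto
      then have "l \<in> cball (hf G) 1" by (simp add: dist_commute)
      then have "l \<in> G" using hf(1)[OF G(1)] by blast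
      then show "v \<in> hf ` {G\<in>A. l \<in> G}" using G by blast
    qed
    then have "infinite (hf ` {G\<in>A. l \<in> G})" using inf1 finite_subset by blast
    then have "infinite {G\<in>A. l \<in> G}" by blast
    then show ?thesis by blast
  qed
  then obtain l where "infinite {G\<in>A. l \<in> G}" by blast
  moreover have "{G\<in>A. l \<in> G} \<subseteq> {G\<in>C. l \<in> G}" by (auto simp: A_def)
  ultimately show False using point_finite[OF gc, of l] finite_subset by blast
qed

lemma layer_SucI:
  assumes "G \<in> C" "G \<inter> layer C B n \<noteq> {}"
  shows "G \<subseteq> layer C B (Suc n)"
  using assms by auto

lemma step:
  fixes z y :: "real^3"
  assumes gc: "good_cover \<sigma> \<eta> C" and D: "D \<in> C" "D \<subseteq> layer C B m" "z \<in> D"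
    and zy: "dist z y \<le> 1"
  shows "\<exists>Q\<in>C. y \<in> Q \<and> Q \<subseteq> layer C B (Suc (Suc (Suc m)))"
proof -
  obtain c r where cr: "D = cball c r" "r \<ge> 1" using radius_ge1[OF gc D(1)] by blast
  obtain b where b: "cball b 1 \<subseteq> D" "z \<in> cball b 1" using unit_sub[OF cr(2)] D(3) cr(1) by blast
  obtain Q where Q: "Q \<in> C" "y \<in> Q" using gc_cover[OF gc] by blast
  obtain c' r' where cr': "Q = cball c' r'" "r' \<ge> 1" using radius_ge1[OF gc Q(1)] by blast
  obtain q where q: "cball q 1 \<subseteq> Q" "y \<in> cball q 1" using unit_sub[OF cr'(2)] Q(2) cr'(1) by blast
  have "dist b q \<le> dist b z + dist z q" by (rule dist_triangle)
  also have "dist z q \<le> dist z y + dist y q" by (rule dist_triangle)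
  finally have bq: "dist b q \<le> 3" using b(2) q(2) zy by (simp add: dist_commute)
  define S where "S = closed_segment b q"
  define F where "F = {G\<in>C. G \<inter> cball b 3 \<noteq> {}}"
  have finF: "finite F" unfolding F_def by (rule loc_fin[OF gc])
  define F1 where "F1 = {G\<in>F. G \<inter> cball b 1 \<noteq> {}}"
  define F2 where "F2 = {G\<in>F. G \<inter> cball q 1 \<noteq> {}}"
  have clG: "closed G" if "G \<in> C" for G
    using gc_ball[OF gc] that by auto
  have fin1: "finite F1" unfolding F1_def by (rule finite_subset[OF _ finF]) auto
  have fin2: "finite F2" unfolding F2_def by (rule finite_subset[OF _ finF]) auto
  have cl1: "closed (\<Union>F1)"
    by (rule closed_Union[OF fin1]) (use clG in \<open>auto simp: F1_def F_def\<close>)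
  have cl2: "closed (\<Union>F2)"
    by (rule closed_Union[OF fin2]) (use clG in \<open>auto simp: F2_def F_def\<close>)
  have Ssub: "S \<subseteq> \<Union>F1 \<union> \<Union>F2"
  proof
    fix p assume pS: "p \<in> S"
    obtain G where G: "G \<in> C" "p \<in> G" using gc_cover[OF gc] by blast
    obtain cc rr where ccr: "G = cball cc rr" "rr \<ge> 1" using radius_ge1[OF gc G(1)] by blast
    have "dist b p \<le> dist b q" using dist_in_closed_segment[of p b q] pS unfolding S_def by (simp add: dist_commute)
    then have "p \<in> cball b 3" using bq by simp
    then have GF: "G \<in> F" unfolding F_def using G by blast
    have "dist cc p \<le> rr" using G(2) ccr(1) by simp
    then have "dist cc b \<le> rr + 1 \<or> dist cc q \<le> rr + 1"
      using key[OF bq _ _ ccr(2)] pS unfolding S_def by blast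
    then have "G \<inter> cball b 1 \<noteq> {} \<or> G \<inter> cball q 1 \<noteq> {}"
      using meet_cballs[of cc b rr 1] meet_cballs[of cc q rr 1] ccr by auto
    then show "p \<in> \<Union>F1 \<union> \<Union>F2" using GF G(2) unfolding F1_def F2_def by blast
  qed
  have bS: "b \<in> S" "q \<in> S" unfolding S_def by auto
  have bD: "b \<in> D" using b(1) by auto
  have bb: "b \<in> cball b 3" "b \<in> cball b 1" by auto
  have DF1: "D \<in> F1" unfolding F1_def F_def using D(1) bD bb by blast
  have QF2: "Q \<in> F2" unfolding F2_def F_def
  proof -
    have "q \<in> Q" using q(1) by auto
    moreover have "q \<in> cball b 3" using bq by simp
    ultimately show "Q \<in> {G \<in> {G \<in> C. G \<inter> cball b 3 \<noteq> {}}. G \<inter> cball q 1 \<noteq> {}}"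
      using Q(1) by auto
  qed
  have qQ: "q \<in> Q" using q(1) by auto
  have n1: "\<Union>F1 \<inter> S \<noteq> {}" using DF1 bS bD by blast
  have n2: "\<Union>F2 \<inter> S \<noteq> {}" using QF2 bS qQ by blast
  have "connected S" unfolding S_def by (rule connected_segment)
  then have "\<Union>F1 \<inter> \<Union>F2 \<inter> S \<noteq> {}"
    using cl1 cl2 Ssub n1 n2 unfolding connected_closed by blast
  then obtain p G1 G2 where P: "G1 \<in> F1" "G2 \<in> F2" "p \<in> G1" "p \<in> G2" by blast
  have G1C: "G1 \<in> C" using P(1) unfolding F1_def F_def by auto
  have G2C: "G2 \<in> C" using P(2) unfolding F2_def F_def by auto
  have "G1 \<inter> cball b 1 \<noteq> {}" using P(1) unfolding F1_def by auto
  then have "G1 \<inter> layer C B m \<noteq> {}" using b(1) D(2) by blast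
  then have L1: "G1 \<subseteq> layer C B (Suc m)" using layer_SucI[OF G1C] by blast
  have "G2 \<inter> layer C B (Suc m) \<noteq> {}" using L1 P(3,4) by blast
  then have L2: "G2 \<subseteq> layer C B (Suc (Suc m))" using layer_SucI[OF G2C] by blast
  have "G2 \<inter> cball q 1 \<noteq> {}" using P(2) unfolding F2_def by auto
  then have "Q \<inter> layer C B (Suc (Suc m)) \<noteq> {}" using q(1) L2 by blast
  then have "Q \<subseteq> layer C B (Suc (Suc (Suc m)))" using layer_SucI[OF Q(1)] by blast
  then show ?thesis using Q by blast
qed

lemma reach:
  fixes x :: "real^3"
  assumes gc: "good_cover \<sigma> \<eta> C" and B: "B \<in> C" "x \<in> B"
  shows "\<forall>y. dist x y \<le> real k \<longrightarrow> (\<exists>Q\<in>C. y \<in> Q \<and> Q \<subseteq> layer C B (3*k))"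
proof (induction k)
  case 0
  show ?case using B by auto
next
  case (Suc k)
  show ?case
  proof (intro allI impI)
    fix y :: "real^3" assume dy: "dist x y \<le> real (Suc k)"
    define d where "d = dist x y"
    obtain z where z: "dist x z \<le> real k" "dist z y \<le> 1"
    proof (cases "d \<le> 1")
      case True
      then show ?thesis using that[of x] d_def by simp
    next
      case False
      define z where "z = y + (1/d) *\<^sub>R (x - y)"
      have d1: "d > 1" using False by simp
      have nd: "norm (x - y) = d" by (simp add: d_def dist_norm)
      have "dist z y = norm ((1/d) *\<^sub>R (x - y))" by (simp add: z_def dist_norm)
      also have "\<dots> = 1" using nd d1 by simp
      finally have zy: "dist z y = 1" .
      have "x - z = (1 - 1/d) *\<^sub>R (x - y)" by (simp add: z_def algebra_simps)
      then have "dist x z = \<bar>1 - 1/d\<bar> * d" using nd by (simp add: dist_norm)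
      also have "\<bar>1 - 1/d\<bar> = 1 - 1/d" using d1 by (simp add: divide_simps)
      also have "(1 - 1/d) * d = d - 1" using d1 by (simp add: algebra_simps)
      finally have "dist x z \<le> real k" using dy d_def by simp
      then show ?thesis using that zy by simp
    qed
    obtain D where D: "D \<in> C" "z \<in> D" "D \<subseteq> layer C B (3*k)" using Suc.IH z(1) by blast
    obtain Q where "Q \<in> C" "y \<in> Q" "Q \<subseteq> layer C B (Suc (Suc (Suc (3*k))))"
      using step[OF gc D(1) D(3) D(2) z(2)] by blast
    moreover have "Suc (Suc (Suc (3*k))) = 3 * Suc k" by simp
    ultimately show "\<exists>Q\<in>C. y \<in> Q \<and> Q \<subseteq> layer C B (3 * Suc k)" by metis
  qed
qed

theorem corollary3p2:
  fixes \<sigma> \<eta> :: real and C :: "(real^3) set set" and B :: "(real^3) set" and x :: "real^3"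
  assumes "\<sigma> > 0" and "\<eta> > 0" and "good_cover \<sigma> \<eta> C"
    and "B \<in> C" and "x \<in> B"
  shows "\<forall>y::real^3. y \<in> layer C B (4 * nat \<lceil>dist x y\<rceil>)"
proof
  fix y :: "real^3"
  define k where "k = nat \<lceil>dist x y\<rceil>"
  have "dist x y \<le> real k" unfolding k_def by linarith
  then obtain Q where Q: "Q \<in> C" "y \<in> Q" "Q \<subseteq> layer C B (3*k)"
    using reach[OF assms(3) assms(4) assms(5), of k] by blast
  have "layer C B (3*k) \<subseteq> layer C B (4*k)"
    using layer_mono[OF gc_cover[OF assms(3)], of "3*k" "4*k"] by simp
  then show "y \<in> layer C B (4 * nat \<lceil>dist x y\<rceil>)" using Q unfolding k_def by blast
qed

end
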